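(* Let $N\ge1$ and $(w,a,\theta)\in\widetilde{\mathcal{D}}_N$. There exists $\omega_0<0$ such that $M_{\mathrm{e}^{i\omega}}(w,a,\theta)\in\mathcal{D}_N$ for every real $\omega$ with $\omega_0\le\omega<0$.
   Context: $P_N=\{1,\dots,N\}$; vectors are functions on $P_N$, $v^{-1}[S]=\{\ell:v_\ell\in S\}$, $\mathrm{Tr}(v,\Lambda):=\sum_{\ell\in\Lambda}v_\ell$. $\mathcal{C}:=\{z:\mathrm{Re}(z)>0\text{ or }z\in i\mathbb{R}_{>0}\}$, $\mathcal{C}^\circ$ the open right half-plane. $\mathbb{D}_N:=\{(w,a,\theta)\in\mathbb{C}\times\mathbb{C}^N\times\mathbb{R}^N:a^{-1}[0]\subseteq\theta^{-1}[\mathbb{R}\smallsetminus\mathbb{Z}]\}$, $\pi(w,a,\theta):=w-\mathrm{Tr}(a,a^{-1}[-\mathcal{C}])$, $\widetilde{\mathcal{D}}_N:=\{\delta\in\mathbb{D}_N:\pi(\delta)\in\mathcal{C}\}$, $\mathcal{D}_N:=\{(w,a,\theta)\in\mathbb{D}_N:\pi(w,a,\theta)\in\mathcal{C}^\circ,\ a_\ell\notin i\mathbb{R}\smallsetminus\{0\}\ \forall\ell\}$. $M_\beta(w,a,\theta):=(\beta w,\beta a,\theta)$. *)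

theory Defs
  imports Complex_Main
begin

text \<open>Vectors on P_N = {1..N} are represented by functions on nat; only the
values on {1..N} matter in every definition below.\<close>

definition PN :: "nat \<Rightarrow> nat set" where
  "PN N = {1..N}"

definition Tr :: "(nat \<Rightarrow> complex) \<Rightarrow> nat set \<Rightarrow> complex" where
  "Tr v \<Lambda> = (\<Sum>l\<in>\<Lambda>. v l)"

definition preim :: "nat \<Rightarrow> (nat \<Rightarrow> 'b) \<Rightarrow> 'b set \<Rightarrow> nat set" where
  "preim N v S = {l \<in> PN N. v l \<in> S}"

definition Cset :: "complex set" where
  "Cset = {z. Re z > 0 \<or> (Re z = 0 \<and> Im z > 0)}"

definition Copen :: "complex set" where
  "Copen = {z. Re z > 0}"

definition DD :: "nat \<Rightarrow> (complex \<times> (nat \<Rightarrow> complex) \<times> (nat \<Rightarrow> real)) set" where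
  "DD N = {(w, a, \<theta>). preim N a {0} \<subseteq> preim N \<theta> (- \<int>)}"

definition piN :: "nat \<Rightarrow> complex \<times> (nat \<Rightarrow> complex) \<times> (nat \<Rightarrow> real) \<Rightarrow> complex" where
  "piN N \<delta> = (case \<delta> of (w, a, \<theta>) \<Rightarrow> w - Tr a (preim N a (uminus ` Cset)))"

definition DtN :: "nat \<Rightarrow> (complex \<times> (nat \<Rightarrow> complex) \<times> (nat \<Rightarrow> real)) set" where
  "DtN N = {\<delta> \<in> DD N. piN N \<delta> \<in> Cset}"

definition DN :: "nat \<Rightarrow> (complex \<times> (nat \<Rightarrow> complex) \<times> (nat \<Rightarrow> real)) set" where
  "DN N = {(w, a, \<theta>) \<in> DD N. piN N (w, a, \<theta>) \<in> Copen \<and>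
             (\<forall>l\<in>PN N. a l \<notin> {z. Re z = 0} - {0})}"

definition Mb :: "complex \<Rightarrow> complex \<times> (nat \<Rightarrow> complex) \<times> (nat \<Rightarrow> real)
                    \<Rightarrow> complex \<times> (nat \<Rightarrow> complex) \<times> (nat \<Rightarrow> real)" where
  "Mb \<beta> \<delta> = (case \<delta> of (w, a, \<theta>) \<Rightarrow> (\<beta> * w, (\<lambda>l. \<beta> * a l), \<theta>))"

end

theory Submission
  imports Defs
begin

lemma Re_rot: "Re (exp (\<i> * of_real w) * z) = cos w * Re z - sin w * Im z"
  by (simp add: cis_conv_exp[symmetric])

lemma rot_ev:
  fixes z :: complex
  assumes "z \<noteq> 0"
  shows "eventually (\<lambda>w. Re (exp (\<i> * of_real w) * z) \<noteq> 0 \<and>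
           (Re (exp (\<i> * of_real w) * z) > 0 \<longleftrightarrow> z \<in> Cset)) (at_left (0::real))"
proof (cases "Re z = 0")
  case False
  have "((\<lambda>w. cos w * Re z - sin w * Im z) \<longlongrightarrow> cos 0 * Re z - sin 0 * Im z) (at_left (0::real))"
    by (intro tendsto_intros)
  hence t: "((\<lambda>w. cos w * Re z - sin w * Im z) \<longlongrightarrow> Re z) (at_left (0::real))" by simp
  show ?thesis
  proof (cases "Re z > 0")
    case True
    from order_tendstoD(1)[OF t True] show ?thesis
      by eventually_elim (unfold Re_rot, use True in \<open>auto simp: Cset_def\<close>)
  next
    case f2: False
    with False have "Re z < 0" by simp
    from order_tendstoD(2)[OF t this] show ?thesis
      by eventually_elim (unfold Re_rot, use False f2 in \<open>auto simp: Cset_def\<close>)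
  qed
next
  case True
  with assms have imz: "Im z \<noteq> 0" using complex_eq_iff by force
  have "eventually (\<lambda>w. w > - pi) (at_left (0::real))"
    by (intro order_tendstoD(1)[OF tendsto_ident_at]) simp
  moreover have "eventually (\<lambda>w. w < 0) (at_left (0::real))"
    by (simp add: eventually_at_filter)
  ultimately show ?thesis
  proof eventually_elim
    case (elim w)
    have "0 < sin (-w)" by (rule sin_gt_zero) (use elim in auto)
    hence s: "sin w < 0" by simp
    have "Re (exp (\<i> * of_real w) * z) = - sin w * Im z" using True unfolding Re_rot by simp
    thus ?case using s imz True
      by (auto simp: Cset_def mult_less_0_iff)
  qed
qed

lemma uminus_Cset: "z \<in> uminus ` Cset \<longleftrightarrow> - z \<in> Cset"
  by (metis image_iff minus_minus)

lemma Cset_Re: "Re z \<noteq> 0 \<Longrightarrow> z \<in> Cset \<longleftrightarrow> Re z > 0"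
  by (auto simp: Cset_def)

theorem lemma6:
  fixes N :: nat and w :: complex and a :: "nat \<Rightarrow> complex" and \<theta> :: "nat \<Rightarrow> real"
  assumes "N \<ge> 1" and "(w, a, \<theta>) \<in> DtN N"
  shows "\<exists>\<omega>0::real. \<omega>0 < 0 \<and>
           (\<forall>\<omega>::real. \<omega>0 \<le> \<omega> \<and> \<omega> < 0 \<longrightarrow> Mb (exp (\<i> * of_real \<omega>)) (w, a, \<theta>) \<in> DN N)"
proof -
  define P where "P = piN N (w, a, \<theta>)"
  have dd: "(w, a, \<theta>) \<in> DD N" and PC: "P \<in> Cset" using assms(2) by (auto simp: DtN_def P_def)
  have P0: "P \<noteq> 0" using PC by (auto simp: Cset_def)
  define Q where "Q = (\<lambda>l w'. (a l = 0 \<or> (Re (exp (\<i> * of_real w') * a l) \<noteq> 0 \<and>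
           (Re (exp (\<i> * of_real w') * a l) > 0 \<longleftrightarrow> a l \<in> Cset) \<and>
           (Re (exp (\<i> * of_real w') * (- a l)) > 0 \<longleftrightarrow> - a l \<in> Cset))))"
  have evl: "eventually (Q l) (at_left (0::real))" for l
  proof (cases "a l = 0")
    case True thus ?thesis by (simp add: Q_def)
  next
    case False
    have "- a l \<noteq> 0" using False by simp
    from eventually_conj[OF rot_ev[OF False] rot_ev[OF this]] show ?thesis
      by eventually_elim (auto simp: Q_def)
  qed
  have ev: "eventually (\<lambda>w'. (\<forall>l\<in>PN N. Q l w') \<and>
        (Re (exp (\<i> * of_real w') * P) \<noteq> 0 \<and> (Re (exp (\<i> * of_real w') * P) > 0 \<longleftrightarrow> P \<in> Cset)))
        (at_left (0::real))"
    by (intro eventually_conj rot_ev[OF P0] eventually_ball_finite) (auto simp: PN_def evl)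
  then obtain b where b: "b < 0" and hb: "\<And>y. b < y \<Longrightarrow> y < 0 \<Longrightarrow> (\<forall>l\<in>PN N. Q l y) \<and>
        (Re (exp (\<i> * of_real y) * P) \<noteq> 0 \<and> (Re (exp (\<i> * of_real y) * P) > 0 \<longleftrightarrow> P \<in> Cset))"
    unfolding eventually_at_left_field by blast
  show ?thesis
  proof (intro exI[of _ "b/2"] conjI allI impI)
    show "b/2 < 0" using b by simp
    fix om :: real assume om: "b/2 \<le> om \<and> om < 0"
    define be where "be = exp (\<i> * of_real om)"
    have be0: "be \<noteq> 0" by (simp add: be_def)
    from hb[of om] om b have Qs: "\<forall>l\<in>PN N. Q l om"
      and RP: "Re (be * P) \<noteq> 0" "Re (be * P) > 0 \<longleftrightarrow> P \<in> Cset" by (auto simp: be_def)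
    have pre0: "preim N (\<lambda>l. be * a l) {0} = preim N a {0}"
      using be0 by (auto simp: preim_def)
    have preC: "preim N (\<lambda>l. be * a l) (uminus ` Cset) = preim N a (uminus ` Cset)"
    proof -
      have "be * a l \<in> uminus ` Cset \<longleftrightarrow> a l \<in> uminus ` Cset" if "l \<in> PN N" for l
      proof (cases "a l = 0")
        case True thus ?thesis by (simp add: uminus_Cset Cset_def)
      next
        case False
        with Qs that have "Re (be * (- a l)) \<noteq> 0" "Re (be * (- a l)) > 0 \<longleftrightarrow> - a l \<in> Cset"
          by (auto simp: Q_def be_def)
        thus ?thesis unfolding uminus_Cset using Cset_Re[of "- (be * a l)"] by simp
      qed
      thus ?thesis by (auto simp: preim_def)
    qed
    have piM: "piN N (be * w, (\<lambda>l. be * a l), \<theta>) = be * P"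
      by (simp add: piN_def P_def preC Tr_def sum_distrib_left right_diff_distrib)
    have im: "\<forall>l\<in>PN N. be * a l \<notin> {z. Re z = 0} - {0}"
    proof
      fix l assume "l \<in> PN N"
      with Qs have "a l = 0 \<or> Re (be * a l) \<noteq> 0" by (auto simp: Q_def be_def)
      thus "be * a l \<notin> {z. Re z = 0} - {0}" by auto
    qed
    show "Mb (exp (\<i> * of_real om)) (w, a, \<theta>) \<in> DN N"
      unfolding be_def[symmetric] Mb_def using dd pre0 piM RP PC im
      by (auto simp: DN_def DD_def Copen_def)
  qed
qed

end
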